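(* Define, for $x\in\mathbb{R}$, $$f_{U|-1}(x)=\frac{0.5}{\sqrt{2\pi}}e^{-(x+2)^{2}}+\frac{0.5}{\sqrt{2\pi}}e^{-x^{2}},\qquad f_{U|+1}(x)=\frac{0.5}{\sqrt{2\pi}}e^{-(x-2)^{2}}+\frac{0.5}{\sqrt{2\pi}}e^{-x^{2}},$$ and let $\Phi(t)=1$ for $t\ge 0$ and $\Phi(t)=0$ for $t<0$. Then there does not exist a continuous function $\Psi:\mathbb{R}\times\mathbb{R}\to[0,\infty)$, $(v,u)\mapsto\Psi(v|u)$, satisfying all three of the following conditions: (1) for every fixed $u\in\mathbb{R}$, $v\mapsto\Psi(v|u)$ is a probability density function on $\mathbb{R}$; (2) the quantity $\int_{-\infty}^{+\infty}\left|\int_{-\infty}^{t}\Psi(v|u)\,dv-\Phi(t-u)\right|^{2}dt$, as $u$ ranges over $\mathbb{R}$, has a strictly positive lower bound (i.e., there is $c>0$ with this quantity $\ge c$ for every $u\in\mathbb{R}$); (3) for each $\mathsf{x}_1\in\{-1,+1\}$ and every $v\in\mathbb{R}$, $\int_{-\infty}^{+\infty}f_{U|\mathsf{x}_1}(u)\Psi(v|u)\,du=f_{U|\mathsf{x}_1}(v)$.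
   Context: This is the "non-manipulability" of the following channel: $X_1,X_2$ are independent and uniform on $\{-1,+1\}$, $N_r$ is noise independent of them with density proportional to $e^{-x^2}$, and the relay receives $U=X_1+X_2+N_r$; $f_{U|\mathsf{x}_1}$ is (up to the printed normalizing constant, which does not affect the claim) the conditional density of $U$ given $X_1=\mathsf{x}_1$. $\Psi(v|u)$ is interpreted as a (memoryless) rule by which the relay, having received $u$, produces a forwarded value $v$; condition (2) says the rule is uniformly bounded away from forwarding $u$ unchanged. *)

theory Defs
  imports "HOL-Analysis.Analysis"
begin

text \<open>Conditional density f_{U|x1} of U = X1 + X2 + N_r given X1 = x1, for x1 in {-1,+1},
  with the normalizing constant as printed in the paper.\<close>
definition fU :: "real \<Rightarrow> real \<Rightarrow> real" where
  "fU x1 x = 0.5 / sqrt (2 * pi) * exp (- ((x - 2 * x1)\<^sup>2)) + 0.5 / sqrt (2 * pi) * exp (- (x\<^sup>2))"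

definition Phi :: "real \<Rightarrow> real" where
  "Phi t = (if t \<ge> 0 then 1 else 0)"

end

theory Submission
  imports Defs "HOL-Probability.Probability"
begin


lemma AE_cont_zero:
  fixes g :: "real \<Rightarrow> real"
  assumes g: "continuous_on UNIV g" and ae: "AE x in lborel. x \<in> U \<longrightarrow> g x = 0"
    and U: "open U" "x0 \<in> U"
  shows "g x0 = 0"
proof (rule ccontr)
  assume nz: "g x0 \<noteq> 0"
  have "open (U \<inter> {x. g x \<noteq> 0})"
    using U(1) open_Collect_neq[OF g continuous_on_const] by (intro open_Int) auto
  moreover have "x0 \<in> U \<inter> {x. g x \<noteq> 0}" using U nz by auto
  ultimately obtain e where e: "e > 0" "ball x0 e \<subseteq> U \<inter> {x. g x \<noteq> 0}"
    by (meson open_contains_ball)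
  have "AE x in lborel. x \<notin> {x0 - e <..< x0 + e}"
  proof (use ae in eventually_elim)
    case (elim x)
    { assume "x \<in> {x0 - e <..< x0 + e}"
      then have "x \<in> ball x0 e" by (auto simp: dist_real_def abs_if)
      with e elim have False by auto }
    then show ?case by blast
  qed
  then have "emeasure lborel {x0 - e <..< x0 + e} = 0"
    by (subst (asm) AE_iff_measurable[OF _ refl]) (auto simp: greaterThanLessThan_def greaterThan_def lessThan_def Collect_conj_eq[symmetric])
  then show False using e by simp
qed

lemma slice1: "continuous_on UNIV (\<lambda>(v, u). G v u) \<Longrightarrow> continuous_on UNIV (\<lambda>v. (G v u :: real))"
proof -
  assume c: "continuous_on UNIV (\<lambda>(v, u). G v u)"
  have "continuous_on UNIV ((\<lambda>(v, u). G v u) \<circ> (\<lambda>v. (v, u)))"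
    by (rule continuous_on_compose[OF _ continuous_on_subset[OF c]]) (auto intro!: continuous_intros)
  then show ?thesis by (simp add: o_def)
qed

lemma slice2: "continuous_on UNIV (\<lambda>(v, u). G v u) \<Longrightarrow> continuous_on UNIV (\<lambda>u. (G v u :: real))"
proof -
  assume c: "continuous_on UNIV (\<lambda>(v, u). G v u)"
  have "continuous_on UNIV ((\<lambda>(v, u). G v u) \<circ> (\<lambda>u. (v, u)))"
    by (rule continuous_on_compose[OF _ continuous_on_subset[OF c]]) (auto intro!: continuous_intros)
  then show ?thesis by (simp add: o_def)
qed

lemma core:
  fixes G :: "real \<Rightarrow> real \<Rightarrow> real" and P Q :: "real \<Rightarrow> real" and t :: real
  assumes Gc: "continuous_on UNIV (\<lambda>(v, u). G v u)"
    and G0: "\<And>v u. 0 \<le> G v u"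
    and G1: "\<And>u. (\<integral>\<^sup>+ v. ennreal (G v u) \<partial>lborel) = 1"
    and Pm: "P \<in> borel_measurable borel" and Qm: "Q \<in> borel_measurable borel"
    and P0: "\<And>u. 0 \<le> P u" and Q0: "\<And>u. 0 \<le> Q u"
    and Pf: "(\<integral>\<^sup>+ u. ennreal (P u) \<partial>lborel) \<noteq> \<infinity>"
    and Qf: "(\<integral>\<^sup>+ u. ennreal (Q u) \<partial>lborel) \<noteq> \<infinity>"
    and PG: "\<And>v. (\<integral>\<^sup>+ u. ennreal (P u * G v u) \<partial>lborel) = ennreal (P v)"
    and QG: "\<And>v. (\<integral>\<^sup>+ u. ennreal (Q u * G v u) \<partial>lborel) = ennreal (Q v)"
    and sL: "\<And>u. u < t \<Longrightarrow> P u < Q u" and sS: "\<And>u. t < u \<Longrightarrow> Q u < P u"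
    and sT: "P t = Q t"
  shows "(\<forall>v u. v < t \<longrightarrow> t < u \<longrightarrow> G v u = 0) \<and> (\<forall>v u. u < t \<longrightarrow> t < v \<longrightarrow> G v u = 0)"
proof -
  note [measurable] = Pm Qm
  define L where "L = {..<t}"
  define S where "S = {t..}"
  have [measurable]: "L \<in> sets borel" "S \<in> sets borel" by (auto simp: L_def S_def)
  have Gm: "(\<lambda>p. G (fst p) (snd p)) \<in> borel_measurable borel"
    using borel_measurable_continuous_onI[OF Gc] by (simp add: case_prod_beta')
  have Gm2[measurable]: "(\<lambda>(u, v). G v u) \<in> borel_measurable (lborel \<Otimes>\<^sub>M lborel)"
  proof -
    have "(\<lambda>p. G (fst p) (snd p)) \<circ> (\<lambda>p. (snd p, fst p)) \<in> borel_measurable (borel :: (real \<times> real) measure)"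
      by (rule measurable_comp[OF _ Gm]) (auto intro!: borel_measurable_continuous_onI continuous_intros)
    then show ?thesis by (simp add: lborel_prod o_def case_prod_beta')
  qed
  have Gv[measurable]: "(\<lambda>v. G v u) \<in> borel_measurable borel" for u
    using borel_measurable_continuous_onI[OF slice1[OF Gc]] .
  have Gu[measurable]: "(\<lambda>u. G v u) \<in> borel_measurable borel" for v
    using borel_measurable_continuous_onI[OF slice2[OF Gc]] .
  define q where "q u = (\<integral>\<^sup>+ v. indicator L v * ennreal (G v u) \<partial>lborel)" for u
  define r where "r u = (\<integral>\<^sup>+ v. indicator S v * ennreal (G v u) \<partial>lborel)" for u
  have qm[measurable]: "q \<in> borel_measurable borel" unfolding q_def by measurable
  have rm[measurable]: "r \<in> borel_measurable borel" unfolding r_def by measurable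
  have qr: "q u + r u = 1" for u
  proof -
    have "q u + r u = (\<integral>\<^sup>+ v. indicator L v * ennreal (G v u) + indicator S v * ennreal (G v u) \<partial>lborel)"
      unfolding q_def r_def by (subst nn_integral_add) auto
    also have "\<dots> = (\<integral>\<^sup>+ v. ennreal (G v u) \<partial>lborel)"
      by (rule nn_integral_cong) (auto simp: L_def S_def indicator_def)
    finally show ?thesis using G1 by simp
  qed
  have ton: "(\<integral>\<^sup>+ v. indicator X v * ennreal (w v) \<partial>lborel) =
      (\<integral>\<^sup>+ u. ennreal (w u) * (\<integral>\<^sup>+ v. indicator X v * ennreal (G v u) \<partial>lborel) \<partial>lborel)"
    if wm[measurable]: "w \<in> borel_measurable borel" and w0: "\<And>u. 0 \<le> w u"
      and wG: "\<And>v. (\<integral>\<^sup>+ u. ennreal (w u * G v u) \<partial>lborel) = ennreal (w v)"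
      and X[measurable]: "X \<in> sets borel" for w X
  proof -
    have "(\<integral>\<^sup>+ v. indicator X v * ennreal (w v) \<partial>lborel)
        = (\<integral>\<^sup>+ v. indicator X v * (\<integral>\<^sup>+ u. ennreal (w u * G v u) \<partial>lborel) \<partial>lborel)"
      by (simp add: wG)
    also have "\<dots> = (\<integral>\<^sup>+ v. (\<integral>\<^sup>+ u. indicator X v * ennreal (w u * G v u) \<partial>lborel) \<partial>lborel)"
      by (rule nn_integral_cong, subst nn_integral_cmult) auto
    also have "\<dots> = (\<integral>\<^sup>+ u. (\<integral>\<^sup>+ v. indicator X v * ennreal (w u * G v u) \<partial>lborel) \<partial>lborel)"
      by (rule lborel_pair.Fubini') measurable
    also have "\<dots> = (\<integral>\<^sup>+ u. ennreal (w u) * (\<integral>\<^sup>+ v. indicator X v * ennreal (G v u) \<partial>lborel) \<partial>lborel)"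
      by (rule nn_integral_cong, subst nn_integral_cmult[symmetric])
        (auto intro!: nn_integral_cong simp: ennreal_mult w0 G0 mult_ac)
    finally show ?thesis .
  qed
  have q1: "q u \<le> 1" and r1: "r u \<le> 1" for u using qr[of u]
    by (metis le_iff_add add.commute)+
  have bal: "(\<integral>\<^sup>+ u. indicator S u * ennreal (w u) * q u \<partial>lborel) =
      (\<integral>\<^sup>+ u. indicator L u * ennreal (w u) * r u \<partial>lborel)"
    if wm[measurable]: "w \<in> borel_measurable borel" and w0: "\<And>u. 0 \<le> w u"
      and wG: "\<And>v. (\<integral>\<^sup>+ u. ennreal (w u * G v u) \<partial>lborel) = ennreal (w v)"
      and wf: "(\<integral>\<^sup>+ u. ennreal (w u) \<partial>lborel) \<noteq> \<infinity>" for w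
  proof -
    have "(\<integral>\<^sup>+ u. indicator L u * ennreal (w u) * q u \<partial>lborel) + (\<integral>\<^sup>+ u. indicator S u * ennreal (w u) * q u \<partial>lborel)
        = (\<integral>\<^sup>+ u. ennreal (w u) * q u \<partial>lborel)"
      by (subst nn_integral_add[symmetric]) (auto intro!: nn_integral_cong simp: L_def S_def indicator_def)
    also have "\<dots> = (\<integral>\<^sup>+ v. indicator L v * ennreal (w v) \<partial>lborel)"
      unfolding q_def by (rule ton[symmetric]) (use w0 wG in auto)
    also have "\<dots> = (\<integral>\<^sup>+ u. indicator L u * ennreal (w u) * q u \<partial>lborel) + (\<integral>\<^sup>+ u. indicator L u * ennreal (w u) * r u \<partial>lborel)"
      by (subst nn_integral_add[symmetric]) (auto intro!: nn_integral_cong simp: qr distrib_left[symmetric] mult.assoc)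
    finally have eq: "(\<integral>\<^sup>+ u. indicator L u * ennreal (w u) * q u \<partial>lborel) + (\<integral>\<^sup>+ u. indicator S u * ennreal (w u) * q u \<partial>lborel)
        = (\<integral>\<^sup>+ u. indicator L u * ennreal (w u) * q u \<partial>lborel) + (\<integral>\<^sup>+ u. indicator L u * ennreal (w u) * r u \<partial>lborel)" .
    have "(\<integral>\<^sup>+ u. indicator L u * ennreal (w u) * q u \<partial>lborel) \<le> (\<integral>\<^sup>+ u. ennreal (w u) \<partial>lborel)"
    proof (rule nn_integral_mono)
      fix u
      have "indicator L u * ennreal (w u) * q u \<le> 1 * ennreal (w u) * 1"
        by (intro mult_mono q1) (auto simp: indicator_def)
      then show "indicator L u * ennreal (w u) * q u \<le> ennreal (w u)" by simp
    qed
    with wf have "(\<integral>\<^sup>+ u. indicator L u * ennreal (w u) * q u \<partial>lborel) \<noteq> \<infinity>"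
      by (auto simp: top_unique)
    with eq show ?thesis by (simp add: ennreal_add_left_cancel)
  qed
  note balP = bal[OF Pm P0 PG Pf] and balQ = bal[OF Qm Q0 QG Qf]
  define Z1 where "Z1 = (\<integral>\<^sup>+ u. indicator S u * ennreal (P u - Q u) * q u \<partial>lborel)"
  define Z2 where "Z2 = (\<integral>\<^sup>+ u. indicator L u * ennreal (Q u - P u) * r u \<partial>lborel)"
  have geS: "Q u \<le> P u" if "u \<in> S" for u
    using that sS[of u] sT by (cases "u = t") (auto simp: S_def)
  have leL: "P u \<le> Q u" if "u \<in> L" for u
    using that sL[of u] by (auto simp: L_def)
  have e3: "(\<integral>\<^sup>+ u. indicator S u * ennreal (P u) * q u \<partial>lborel) = (\<integral>\<^sup>+ u. indicator S u * ennreal (Q u) * q u \<partial>lborel) + Z1"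
  proof -
    have "(\<integral>\<^sup>+ u. indicator S u * ennreal (P u) * q u \<partial>lborel) =
      (\<integral>\<^sup>+ u. indicator S u * ennreal (Q u) * q u + indicator S u * ennreal (P u - Q u) * q u \<partial>lborel)"
    proof (rule nn_integral_cong)
      fix u
      show "indicator S u * ennreal (P u) * q u = indicator S u * ennreal (Q u) * q u + indicator S u * ennreal (P u - Q u) * q u"
      proof (cases "u \<in> S")
        case True
        then have "ennreal (P u) = ennreal (Q u) + ennreal (P u - Q u)"
          using geS[of u] Q0[of u] by (subst ennreal_plus[symmetric]) auto
        then show ?thesis by (simp add: distrib_right distrib_left)
      qed simp
    qed
    also have "\<dots> = (\<integral>\<^sup>+ u. indicator S u * ennreal (Q u) * q u \<partial>lborel) + Z1"
      unfolding Z1_def by (rule nn_integral_add) auto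
    finally show ?thesis .
  qed
  have e4: "(\<integral>\<^sup>+ u. indicator L u * ennreal (Q u) * r u \<partial>lborel) = (\<integral>\<^sup>+ u. indicator L u * ennreal (P u) * r u \<partial>lborel) + Z2"
  proof -
    have "(\<integral>\<^sup>+ u. indicator L u * ennreal (Q u) * r u \<partial>lborel) =
      (\<integral>\<^sup>+ u. indicator L u * ennreal (P u) * r u + indicator L u * ennreal (Q u - P u) * r u \<partial>lborel)"
    proof (rule nn_integral_cong)
      fix u
      show "indicator L u * ennreal (Q u) * r u = indicator L u * ennreal (P u) * r u + indicator L u * ennreal (Q u - P u) * r u"
      proof (cases "u \<in> L")
        case True
        then have "ennreal (Q u) = ennreal (P u) + ennreal (Q u - P u)"
          using leL[of u] P0[of u] by (subst ennreal_plus[symmetric]) auto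
        then show ?thesis by (simp add: distrib_right distrib_left)
      qed simp
    qed
    also have "\<dots> = (\<integral>\<^sup>+ u. indicator L u * ennreal (P u) * r u \<partial>lborel) + Z2"
      unfolding Z2_def by (rule nn_integral_add) auto
    finally show ?thesis .
  qed
  have finLPr: "(\<integral>\<^sup>+ u. indicator L u * ennreal (P u) * r u \<partial>lborel) \<noteq> \<infinity>"
  proof -
    have "(\<integral>\<^sup>+ u. indicator L u * ennreal (P u) * r u \<partial>lborel) \<le> (\<integral>\<^sup>+ u. ennreal (P u) \<partial>lborel)"
    proof (rule nn_integral_mono)
      fix u
      have "indicator L u * ennreal (P u) * r u \<le> 1 * ennreal (P u) * 1"
        by (intro mult_mono r1) (auto simp: indicator_def)
      then show "indicator L u * ennreal (P u) * r u \<le> ennreal (P u)" by simp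
    qed
    with Pf show ?thesis by (auto simp: top_unique)
  qed
  have "(\<integral>\<^sup>+ u. indicator L u * ennreal (P u) * r u \<partial>lborel) + 0 =
        (\<integral>\<^sup>+ u. indicator L u * ennreal (P u) * r u \<partial>lborel) + (Z2 + Z1)"
    using balP balQ e3 e4 by (simp add: add.assoc)
  then have "Z2 + Z1 = 0" using finLPr by (simp only: ennreal_add_left_cancel) auto
  then have Z1: "Z1 = 0" and Z2: "Z2 = 0" by auto
  have "AE u in lborel. indicator S u * ennreal (P u - Q u) * q u = 0"
    using Z1 unfolding Z1_def by (subst (asm) nn_integral_0_iff_AE) auto
  then have H1: "AE u in lborel. u \<in> {t<..} \<longrightarrow> (\<forall>v<t. G v u = 0)"
  proof eventually_elim
    case (elim u)
    show ?case
    proof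
      assume u: "u \<in> {t<..}"
      then have "P u - Q u > 0" using sS[of u] by auto
      with u elim have "q u = 0" by (auto simp: S_def)
      then have "AE v in lborel. indicator L v * ennreal (G v u) = 0"
        unfolding q_def by (subst (asm) nn_integral_0_iff_AE) auto
      then have ae: "AE v in lborel. v \<in> {..<t} \<longrightarrow> G v u = 0"
        by eventually_elim (use G0 in \<open>auto simp: L_def\<close>)
      show "\<forall>v<t. G v u = 0"
        using AE_cont_zero[OF slice1[OF Gc] ae] by auto
    qed
  qed
  have "AE u in lborel. indicator L u * ennreal (Q u - P u) * r u = 0"
    using Z2 unfolding Z2_def by (subst (asm) nn_integral_0_iff_AE) auto
  then have H2: "AE u in lborel. u \<in> {..<t} \<longrightarrow> (\<forall>v>t. G v u = 0)"
  proof eventually_elim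
    case (elim u)
    show ?case
    proof
      assume u: "u \<in> {..<t}"
      then have "Q u - P u > 0" using sL[of u] by auto
      with u elim have "r u = 0" by (auto simp: L_def)
      then have "AE v in lborel. indicator S v * ennreal (G v u) = 0"
        unfolding r_def by (subst (asm) nn_integral_0_iff_AE) auto
      then have ae: "AE v in lborel. v \<in> {t<..} \<longrightarrow> G v u = 0"
        by eventually_elim (use G0 in \<open>auto simp: S_def\<close>)
      show "\<forall>v>t. G v u = 0"
        using AE_cont_zero[OF slice1[OF Gc] ae] by auto
    qed
  qed
  show ?thesis
  proof (intro conjI allI impI)
    fix v u assume v: "v < t" and u: "t < u"
    have "AE u in lborel. u \<in> {t<..} \<longrightarrow> G v u = 0"
      using H1 by eventually_elim (use v in auto)
    from AE_cont_zero[OF slice2[OF Gc] this] u show "G v u = 0" by auto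
  next
    fix v u assume u: "u < t" and v: "t < v"
    have "AE u in lborel. u \<in> {..<t} \<longrightarrow> G v u = 0"
      using H2 by eventually_elim (use v in auto)
    from AE_cont_zero[OF slice2[OF Gc] this] u show "G v u = 0" by auto
  qed
qed



lemma exp_nd: "exp (- ((x - m)\<^sup>2)) = sqrt pi * normal_density m (sqrt (1/2)) x"
  unfolding normal_density_def by (simp add: real_sqrt_mult)

lemma fU_eq: "fU x1 = (\<lambda>x. (0.5 / sqrt (2 * pi) * sqrt pi) * normal_density (2 * x1) (sqrt (1/2)) x
    + (0.5 / sqrt (2 * pi) * sqrt pi) * normal_density 0 (sqrt (1/2)) x)"
  using exp_nd[of _ "2 * x1"] exp_nd[of _ 0] by (auto simp: fU_def fun_eq_iff)

lemma fU_integrable: "integrable lborel (fU x1)"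
  unfolding fU_eq by (intro Bochner_Integration.integrable_add integrable_mult_right) auto

lemma fU_pos: "0 < fU x1 x"
  unfolding fU_def by (intro add_pos_pos mult_pos_pos) auto

lemma fU_cont: "continuous_on UNIV (fU x1)"
  unfolding fU_def by (intro continuous_intros) auto

lemma fU_fin: "(\<integral>\<^sup>+ u. ennreal (fU x1 u) \<partial>lborel) \<noteq> \<infinity>"
  using nn_integral_eq_integral[OF fU_integrable, of x1] fU_pos[of x1, THEN less_imp_le] by simp

lemma ratio:
  fixes u t :: real
  assumes "u < t"
  shows "fU (-1) t * fU 1 u < fU 1 t * fU (-1) u"
proof -
  define c :: real where "c = 0.5 / sqrt (2 * pi)"
  have c: "c > 0" by (simp add: c_def)
  define E where "E x = exp (- (x\<^sup>2))" for x :: real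
  have m: "E a * E b < E c' * E d" if "a\<^sup>2 + b\<^sup>2 > c'\<^sup>2 + d\<^sup>2" for a b c' d
    unfolding E_def exp_add[symmetric] using that by simp
  have h1: "E (t + 2) * E (u - 2) < E (t - 2) * E (u + 2)"
    by (rule m) (use assms in \<open>simp add: power2_eq_square algebra_simps\<close>)
  have h2: "E (t + 2) * E u < E t * E (u + 2)"
    by (rule m) (use assms in \<open>simp add: power2_eq_square algebra_simps\<close>)
  have h3: "E t * E (u - 2) < E (t - 2) * E u"
    by (rule m) (use assms in \<open>simp add: power2_eq_square algebra_simps\<close>)
  have s: "(E (t + 2) + E t) * (E (u - 2) + E u) < (E (t - 2) + E t) * (E (u + 2) + E u)"
    using h1 h2 h3 by (simp add: algebra_simps)
  have "fU (-1) t * fU 1 u = (c * c) * ((E (t + 2) + E t) * (E (u - 2) + E u))"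
    by (simp add: fU_def c_def E_def algebra_simps)
  also have "\<dots> < (c * c) * ((E (t - 2) + E t) * (E (u + 2) + E u))"
    using s c by simp
  also have "\<dots> = fU 1 t * fU (-1) u"
    by (simp add: fU_def c_def E_def algebra_simps)
  finally show ?thesis .
qed

theorem proposition1:
  shows "\<not> (\<exists>\<Psi> :: real \<Rightarrow> real \<Rightarrow> real.
      continuous_on UNIV (\<lambda>(v, u). \<Psi> v u)
    \<and> (\<forall>v u. 0 \<le> \<Psi> v u)
    \<and> (\<forall>u. (\<lambda>v. \<Psi> v u) \<in> borel_measurable lborel
           \<and> (\<integral>\<^sup>+ v. ennreal (\<Psi> v u) \<partial>lborel) = 1)
    \<and> (\<exists>c > 0. \<forall>u.
          (\<integral>\<^sup>+ t. ennreal ((\<bar>(\<integral>v\<in>{..t}. \<Psi> v u \<partial>lborel) - Phi (t - u)\<bar>)\<^sup>2) \<partial>lborel)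
            \<ge> ennreal c)
    \<and> (\<forall>x1 \<in> {-1, 1::real}. \<forall>v.
          (\<integral>\<^sup>+ u. ennreal (fU x1 u * \<Psi> v u) \<partial>lborel) = ennreal (fU x1 v)))"
proof
  assume "\<exists>\<Psi> :: real \<Rightarrow> real \<Rightarrow> real.
      continuous_on UNIV (\<lambda>(v, u). \<Psi> v u)
    \<and> (\<forall>v u. 0 \<le> \<Psi> v u)
    \<and> (\<forall>u. (\<lambda>v. \<Psi> v u) \<in> borel_measurable lborel
           \<and> (\<integral>\<^sup>+ v. ennreal (\<Psi> v u) \<partial>lborel) = 1)
    \<and> (\<exists>c > 0. \<forall>u.
          (\<integral>\<^sup>+ t. ennreal ((\<bar>(\<integral>v\<in>{..t}. \<Psi> v u \<partial>lborel) - Phi (t - u)\<bar>)\<^sup>2) \<partial>lborel)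
            \<ge> ennreal c)
    \<and> (\<forall>x1 \<in> {-1, 1::real}. \<forall>v.
          (\<integral>\<^sup>+ u. ennreal (fU x1 u * \<Psi> v u) \<partial>lborel) = ennreal (fU x1 v))"
  then obtain G :: "real \<Rightarrow> real \<Rightarrow> real" where
    Gc: "continuous_on UNIV (\<lambda>(v, u). G v u)" and G0: "\<And>v u. 0 \<le> G v u"
    and G1: "\<And>u. (\<integral>\<^sup>+ v. ennreal (G v u) \<partial>lborel) = 1"
    and pres: "\<And>x1 v. x1 \<in> {-1, 1} \<Longrightarrow> (\<integral>\<^sup>+ u. ennreal (fU x1 u * G v u) \<partial>lborel) = ennreal (fU x1 v)"
    by blast
  have fm: "fU x1 \<in> borel_measurable borel" for x1
    by (rule borel_measurable_continuous_onI[OF fU_cont])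
  have scale: "(\<integral>\<^sup>+ u. ennreal (k * fU x1 u * G v u) \<partial>lborel) = ennreal (k * fU x1 v)"
    if "x1 \<in> {-1, 1}" "0 \<le> k" for x1 k v
  proof -
    have "(\<integral>\<^sup>+ u. ennreal (k * fU x1 u * G v u) \<partial>lborel) = (\<integral>\<^sup>+ u. ennreal k * ennreal (fU x1 u * G v u) \<partial>lborel)"
      using that G0 fU_pos[of x1, THEN less_imp_le] by (intro nn_integral_cong) (simp add: ennreal_mult mult.assoc)
    also have "\<dots> = ennreal k * ennreal (fU x1 v)"
      using borel_measurable_continuous_onI[OF slice2[OF Gc]] fm
      by (subst nn_integral_cmult) (auto simp: pres[OF that(1)])
    finally show ?thesis using that fU_pos[of x1 v] by (simp add: ennreal_mult)
  qed
  have fin: "(\<integral>\<^sup>+ u. ennreal (k * fU x1 u) \<partial>lborel) \<noteq> \<infinity>" if "0 \<le> k" for k x1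
  proof -
    have "(\<integral>\<^sup>+ u. ennreal (k * fU x1 u) \<partial>lborel) = ennreal k * (\<integral>\<^sup>+ u. ennreal (fU x1 u) \<partial>lborel)"
      using that fU_pos[of x1, THEN less_imp_le] fm[of x1]
      by (subst nn_integral_cmult[symmetric]) (auto simp: ennreal_mult)
    then show ?thesis using fU_fin[of x1] by (simp add: ennreal_mult_eq_top_iff)
  qed
  have zero: "G v u = 0" if "v \<noteq> u" for v u
  proof -
    define t where "t = (u + v) / 2"
    have "(\<forall>v u. v < t \<longrightarrow> t < u \<longrightarrow> G v u = 0) \<and> (\<forall>v u. u < t \<longrightarrow> t < v \<longrightarrow> G v u = 0)"
    proof (rule core[OF Gc G0 G1, where P = "\<lambda>u. fU (-1) t * fU 1 u" and Q = "\<lambda>u. fU 1 t * fU (-1) u"])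
      show "(\<lambda>u. fU (-1) t * fU 1 u) \<in> borel_measurable borel" "(\<lambda>u. fU 1 t * fU (-1) u) \<in> borel_measurable borel"
        using fm by auto
      show "0 \<le> fU (-1) t * fU 1 u" "0 \<le> fU 1 t * fU (-1) u" for u
        using fU_pos by (auto intro: less_imp_le)
      show "(\<integral>\<^sup>+ u. ennreal (fU (-1) t * fU 1 u) \<partial>lborel) \<noteq> \<infinity>" "(\<integral>\<^sup>+ u. ennreal (fU 1 t * fU (-1) u) \<partial>lborel) \<noteq> \<infinity>"
        using fin[of "fU (-1) t" 1] fin[of "fU 1 t" "-1"] fU_pos[of "-1" t] fU_pos[of 1 t] by auto
      show "(\<integral>\<^sup>+ u. ennreal (fU (-1) t * fU 1 u * G v u) \<partial>lborel) = ennreal (fU (-1) t * fU 1 v)"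
        "(\<integral>\<^sup>+ u. ennreal (fU 1 t * fU (-1) u * G v u) \<partial>lborel) = ennreal (fU 1 t * fU (-1) v)" for v
        using scale[of 1 "fU (-1) t" v] scale[of "-1" "fU 1 t" v] fU_pos[of "-1" t] fU_pos[of 1 t] by auto
      show "fU (-1) t * fU 1 u < fU 1 t * fU (-1) u" if "u < t" for u
        using ratio[OF that] .
      show "fU 1 t * fU (-1) u < fU (-1) t * fU 1 u" if "t < u" for u
        using ratio[OF that] by (simp add: mult.commute)
      show "fU (-1) t * fU 1 t = fU 1 t * fU (-1) t" by simp
    qed
    then show ?thesis using that unfolding t_def by (cases "v < u") auto
  qed
  have "(\<integral>\<^sup>+ v. ennreal (G v 0) \<partial>lborel) = 0"
  proof (subst nn_integral_0_iff_AE)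
    show "(\<lambda>v. ennreal (G v 0)) \<in> borel_measurable lborel"
      using borel_measurable_continuous_onI[OF slice1[OF Gc]] by simp
    show "AE v in lborel. ennreal (G v 0) = 0"
      using AE_lborel_singleton[of "0::real"] by eventually_elim (auto simp: zero)
  qed
  then show False using G1[of 0] by simp
qed

end
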